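(* Let $L\subset\mathfrak{sl}_2(\mathbb{C}[\lambda])$ be a Lie subalgebra of finite codimension. Then the associative algebra $\mathcal{I}(L)$ is commutative and is isomorphic to the field $\mathbb{C}(\lambda)$ of rational functions in $\lambda$.
   Context: $\mathfrak{sl}_2(\mathbb{C}[\lambda])=\mathfrak{sl}_2(\mathbb{C})\otimes_{\mathbb{C}}\mathbb{C}[\lambda]$ with bracket $[y_1\otimes f_1,y_2\otimes f_2]=[y_1,y_2]\otimes f_1f_2$. For a Lie algebra $\mathfrak{L}$ over $\mathbb{C}$, an admissible pair is $(h,\mathfrak{h})$ with $\mathfrak{h}\subset\mathfrak{L}$ a Lie subalgebra of finite codimension and $h\colon\mathfrak{h}\to\mathfrak{L}$ linear with $h([p_1,p_2])=[h(p_1),p_2]=[p_1,h(p_2)]$ for all $p_1,p_2\in\mathfrak{h}$. Two admissible pairs $(h,\mathfrak{h}),(\tilde h,\tilde{\mathfrak{h}})$ are equivalent if $h$ and $\tilde h$ agree on some subalgebra of finite codimension contained in $\mathfrak{h}\cap\tilde{\mathfrak{h}}$. $\mathcal{I}(\mathfrak{L})$ is the set of equivalence classes, an associative algebra with $c[(h,\mathfrak{h})]=[(ch,\mathfrak{h})]$, $[(h_1,\mathfrak{h}_1)]+[(h_2,\mathfrak{h}_2)]=[(h_1+h_2,\mathfrak{h}_1\cap\mathfrak{h}_2)]$, and $[(h_1,\mathfrak{h}_1)]\cdot[(h_2,\mathfrak{h}_2)]=[(h_1\circ h_2,\hat{\mathfrak{h}})]$ with $\hat{\mathfrak{h}}=\{w\in\mathfrak{h}_1\cap\mathfrak{h}_2: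 h_2(w)\in\mathfrak{h}_1\}$. *)

theory Defs
  imports "HOL-Computational_Algebra.Polynomial" "HOL-Computational_Algebra.Fraction_Field"
begin

text \<open>sl_2(C[lambda]): an element a H + b E + c F (a,b,c complex polynomials) is
  represented by the triple (a,b,c); H, E, F the standard basis of sl_2(C).\<close>
type_synonym sl2 = "complex poly \<times> complex poly \<times> complex poly"

definition sl2_zero :: sl2 where "sl2_zero = (0, 0, 0)"

definition sl2_add :: "sl2 \<Rightarrow> sl2 \<Rightarrow> sl2" where
  "sl2_add x y = (case x of (a, b, c) \<Rightarrow> case y of (a', b', c') \<Rightarrow> (a + a', b + b', c + c'))"

definition sl2_scale :: "complex \<Rightarrow> sl2 \<Rightarrow> sl2" where
  "sl2_scale k x = (case x of (a, b, c) \<Rightarrow> (smult k a, smult k b, smult k c))"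

text \<open>Bracket: [y1 (x) f1, y2 (x) f2] = [y1,y2] (x) f1 f2, with [H,E]=2E, [H,F]=-2F, [E,F]=H.\<close>
definition sl2_bracket :: "sl2 \<Rightarrow> sl2 \<Rightarrow> sl2" where
  "sl2_bracket x y = (case x of (a, b, c) \<Rightarrow> case y of (a', b', c') \<Rightarrow>
      (b * c' - c * b', smult 2 (a * b' - b * a'), smult (-2) (a * c' - c * a')))"

definition subspace_sl2 :: "sl2 set \<Rightarrow> bool" where
  "subspace_sl2 V \<longleftrightarrow> sl2_zero \<in> V \<and> (\<forall>x\<in>V. \<forall>y\<in>V. sl2_add x y \<in> V)
     \<and> (\<forall>k. \<forall>x\<in>V. sl2_scale k x \<in> V)"

definition lie_subalg :: "sl2 set \<Rightarrow> bool" where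
  "lie_subalg V \<longleftrightarrow> subspace_sl2 V \<and> (\<forall>x\<in>V. \<forall>y\<in>V. sl2_bracket x y \<in> V)"

definition fin_codim :: "sl2 set \<Rightarrow> sl2 set \<Rightarrow> bool" where
  "fin_codim W V \<longleftrightarrow> W \<subseteq> V \<and> (\<exists>vs :: sl2 list. set vs \<subseteq> V \<and>
      (\<forall>v\<in>V. \<exists>w\<in>W. \<exists>cs :: complex list. length cs = length vs \<and>
          v = sl2_add w (foldr sl2_add (map2 sl2_scale cs vs) sl2_zero)))"

type_synonym sl2_pair = "(sl2 \<Rightarrow> sl2) \<times> sl2 set"

definition admissible :: "sl2 set \<Rightarrow> sl2_pair \<Rightarrow> bool" where
  "admissible L p \<longleftrightarrow> (case p of (h, hh) \<Rightarrow>
     lie_subalg hh \<and> fin_codim hh L \<and> (\<forall>x\<in>hh. h x \<in> L)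
     \<and> (\<forall>x\<in>hh. \<forall>y\<in>hh. h (sl2_add x y) = sl2_add (h x) (h y))
     \<and> (\<forall>k. \<forall>x\<in>hh. h (sl2_scale k x) = sl2_scale k (h x))
     \<and> (\<forall>p1\<in>hh. \<forall>p2\<in>hh. h (sl2_bracket p1 p2) = sl2_bracket (h p1) p2
                         \<and> h (sl2_bracket p1 p2) = sl2_bracket p1 (h p2)))"

definition adm_equiv :: "sl2 set \<Rightarrow> sl2_pair \<Rightarrow> sl2_pair \<Rightarrow> bool" where
  "adm_equiv L p q \<longleftrightarrow> (\<exists>K. lie_subalg K \<and> fin_codim K L \<and> K \<subseteq> snd p \<inter> snd q
      \<and> (\<forall>x\<in>K. fst p x = fst q x))"

definition adm_scale :: "complex \<Rightarrow> sl2_pair \<Rightarrow> sl2_pair" where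
  "adm_scale k p = ((\<lambda>x. sl2_scale k (fst p x)), snd p)"

definition adm_add :: "sl2_pair \<Rightarrow> sl2_pair \<Rightarrow> sl2_pair" where
  "adm_add p q = ((\<lambda>x. sl2_add (fst p x) (fst q x)), snd p \<inter> snd q)"

definition adm_mul :: "sl2_pair \<Rightarrow> sl2_pair \<Rightarrow> sl2_pair" where
  "adm_mul p q = (fst p \<circ> fst q, {w \<in> snd p \<inter> snd q. fst q w \<in> snd p})"

end

theory Submission
  imports Defs "HOL-Library.Product_Plus"
begin

lemma sl2_add_eq: "sl2_add x y = x + y"
  by (cases x; cases y) (auto simp: sl2_add_def)

lemma sl2_add_fun: "sl2_add = (+)"
  by (rule ext)+ (simp add: sl2_add_eq)

lemma sl2_zero_eq: "sl2_zero = 0"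
  by (simp add: sl2_zero_def zero_prod_def)

lemma sl2_scale_simp[simp]: "sl2_scale k (a,b,c) = (smult k a, smult k b, smult k c)"
  by (simp add: sl2_scale_def)

interpretation S2: vector_space sl2_scale
  apply unfold_locales
  by (auto simp: sl2_scale_def smult_add_right smult_add_left split: prod.splits)

lemma subspace_sl2_eq: "subspace_sl2 V \<longleftrightarrow> S2.subspace V"
  by (simp add: subspace_sl2_def S2.subspace_def sl2_add_eq sl2_zero_eq)

lemma foldr_span: "{foldr sl2_add (map2 sl2_scale cs vs) sl2_zero | cs. length cs = length vs}
    = S2.span (set vs)"
  unfolding sl2_add_fun sl2_zero_eq
proof (induction vs)
  case Nil
  then show ?case by (simp add: sl2_zero_eq)
next
  case (Cons v vs)
  have "x \<in> {foldr (+) (map2 sl2_scale cs (v#vs)) 0 | cs. length cs = length (v#vs)}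
    \<longleftrightarrow> (\<exists>k. x - sl2_scale k v \<in> S2.span (set vs))" for x
  proof
    assume "x \<in> {foldr (+) (map2 sl2_scale cs (v#vs)) 0 | cs. length cs = length (v#vs)}"
    then obtain cs where "length cs = length (v#vs)" "x = foldr (+) (map2 sl2_scale cs (v#vs)) 0"
      by blast
    then obtain c cs' where "cs = c # cs'" "length cs' = length vs" by (cases cs) auto
    then show "\<exists>k. x - sl2_scale k v \<in> S2.span (set vs)"
      using Cons.IH \<open>x = _\<close> by (intro exI[of _ c]) auto
  next
    assume "\<exists>k. x - sl2_scale k v \<in> S2.span (set vs)"
    then obtain k where "x - sl2_scale k v \<in> S2.span (set vs)" by blast
    then obtain cs where "length cs = length vs" "x - sl2_scale k v = foldr (+) (map2 sl2_scale cs vs) 0"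
      using Cons.IH by blast
    then show "x \<in> {foldr (+) (map2 sl2_scale cs (v#vs)) 0 | cs. length cs = length (v#vs)}"
      by (intro CollectI exI[of _ "k # cs"]) (auto simp: algebra_simps)
  qed
  then show ?case by (auto simp: S2.span_insert)
qed

lemma fin_codim_iff: "fin_codim W V \<longleftrightarrow> W \<subseteq> V \<and> (\<exists>S. finite S \<and> S \<subseteq> V \<and>
   (\<forall>v\<in>V. \<exists>w\<in>W. v - w \<in> S2.span S))"
proof -
  have "(\<exists>cs. length cs = length vs \<and> v = sl2_add w (foldr sl2_add (map2 sl2_scale cs vs) sl2_zero))
     \<longleftrightarrow> v - w \<in> S2.span (set vs)" for v w vs
  proof -
    have "(\<exists>cs. length cs = length vs \<and> v = w + foldr (+) (map2 sl2_scale cs vs) 0)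
       \<longleftrightarrow> (\<exists>cs. length cs = length vs \<and> v - w = foldr (+) (map2 sl2_scale cs vs) 0)"
      by (metis add_diff_cancel_left' diff_add_cancel add.commute)
    also have "\<dots> \<longleftrightarrow> v - w \<in> S2.span (set vs)"
      using foldr_span[of vs] unfolding sl2_add_fun sl2_zero_eq by blast
    finally show ?thesis unfolding sl2_add_fun sl2_zero_eq .
  qed
  then have "fin_codim W V \<longleftrightarrow> W \<subseteq> V \<and> (\<exists>vs. set vs \<subseteq> V \<and> (\<forall>v\<in>V. \<exists>w\<in>W. v - w \<in> S2.span (set vs)))"
    unfolding fin_codim_def by metis
  also have "\<dots> \<longleftrightarrow> W \<subseteq> V \<and> (\<exists>S. finite S \<and> S \<subseteq> V \<and> (\<forall>v\<in>V. \<exists>w\<in>W. v - w \<in> S2.span S))"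
    by (metis finite_list List.finite_set)
  finally show ?thesis .
qed



lemma closed_sum:
  fixes J :: "'b::comm_monoid_add set"
  assumes "0 \<in> J" "\<forall>x\<in>J. \<forall>y\<in>J. x + y \<in> J" "\<forall>i\<in>A. f i \<in> J"
  shows "sum f A \<in> J"
  using assms(3)
proof (induction A rule: infinite_finite_induct)
  case (infinite A) then show ?case using assms(1) by simp
next
  case empty then show ?case using assms(1) by simp
next
  case (insert x F) then show ?case using assms(2) by simp
qed

lemma line_ideal:
  fixes J :: "complex poly set" and u :: "complex poly"
  assumes J0: "0 \<in> J" and Jadd: "\<forall>x\<in>J. \<forall>y\<in>J. x + y \<in> J"
    and Jsc: "\<forall>c. \<forall>x\<in>J. smult c x \<in> J" and Ju: "\<forall>x\<in>J. u * x \<in> J" and du: "degree u \<ge> 1"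
    and pig: "\<And>\<psi>. (\<forall>a b. \<psi> (a + b) = \<psi> a + \<psi> b) \<Longrightarrow> (\<forall>c a. \<psi> (smult c a) = smult c (\<psi> a))
               \<Longrightarrow> (\<exists>s. s \<noteq> 0 \<and> \<psi> s \<in> J)"
  shows "\<exists>P. P \<noteq> 0 \<and> (\<forall>r. P * r \<in> J)"
proof -
  define n where "n = degree u"
  have comp: "pcompose t u * b \<in> J" if "b \<in> J" for t b
    using that
  proof (induction t)
    case 0 then show ?case using J0 by simp
  next
    case (pCons a p)
    have "pcompose (pCons a p) u * b = smult a b + u * (pcompose p u * b)"
      by (simp add: pcompose_pCons algebra_simps)
    then show ?case using pCons Jadd Jsc Ju by simp
  qed
  have "\<exists>s. s \<noteq> 0 \<and> monom 1 i * pcompose s u \<in> J" for i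
    by (rule pig) (auto simp: pcompose_add pcompose_smult algebra_simps)
  then obtain sf where sf: "\<And>i. sf i \<noteq> 0 \<and> monom 1 i * pcompose (sf i) u \<in> J" by metis
  define P where "P = pcompose (\<Prod>i<n. sf i) u"
  have P0: "P \<noteq> 0"
    unfolding P_def using pcompose_eq_0[of "\<Prod>i<n. sf i" u] du sf by auto
  have mon: "monom 1 i * P \<in> J" if "i < n" for i
  proof -
    have "(\<Prod>i<n. sf i) = sf i * (\<Prod>j\<in>{..<n} - {i}. sf j)"
      using that by (simp add: prod.remove)
    then have eq: "monom 1 i * P = pcompose (\<Prod>j\<in>{..<n} - {i}. sf j) u * (monom 1 i * pcompose (sf i) u)"
      unfolding P_def by (simp add: pcompose_mult algebra_simps)
    show ?thesis unfolding eq using comp[of "monom 1 i * pcompose (sf i) u"] sf by blast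
  qed
  have small: "P * m \<in> J" if "degree m < n" for m
  proof -
    have "P * m = (\<Sum>i\<le>degree m. smult (coeff m i) (monom 1 i * P))"
    proof -
      have "P * m = P * (\<Sum>i\<le>degree m. monom (coeff m i) i)" by (simp add: poly_as_sum_of_monoms)
      also have "\<dots> = (\<Sum>i\<le>degree m. smult (coeff m i) (monom 1 i * P))"
        unfolding sum_distrib_left
      proof (rule sum.cong[OF refl])
        fix i
        have "monom (coeff m i) i = smult (coeff m i) (monom 1 i)" by (simp add: smult_monom)
        then show "P * monom (coeff m i) i = smult (coeff m i) (monom 1 i * P)"
          by (metis mult.commute mult_smult_right)
      qed
      finally show ?thesis .
    qed
    also have "\<dots> \<in> J"
      by (rule closed_sum[OF J0 Jadd]) (use mon that Jsc in auto)
    finally show ?thesis .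
  qed
  have "P * r \<in> J" for r
  proof (induction r rule: measure_induct_rule[of degree])
    case (less r)
    show ?case
    proof (cases "degree r < n")
      case True then show ?thesis using small by simp
    next
      case False
      have u0: "u \<noteq> 0" using du by auto
      have "degree (r mod u) < n"
        using degree_mod_less[OF u0, of r] du n_def by auto
      then have m: "P * (r mod u) \<in> J" using small by simp
      have "degree (r div u) < degree r"
        using False du n_def by (intro degree_div_less) auto
      then have d: "P * (r div u) \<in> J" using less by simp
      have "P * r = u * (P * (r div u)) + P * (r mod u)"
        if "\<And>a b. P * (a * u + b) = u * (P * a) + P * b"
      proof -
        have "P * r = P * (r div u * u + r mod u)" by (simp only: div_mult_mod_eq)
        also have "\<dots> = u * (P * (r div u)) + P * (r mod u)"
          using that[of "r div u" "r mod u"] .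
        finally show ?thesis .
      qed
      moreover have "P * (a * u + b) = u * (P * a) + P * b" for a b by (simp add: algebra_simps)
      ultimately show ?thesis using m d Ju Jadd by simp
    qed
  qed
  then show ?thesis using P0 by blast
qed



lemma pig:
  assumes "finite S"
  shows "S2.subspace V \<Longrightarrow> (\<forall>a b. \<psi> (a + b) = \<psi> a + \<psi> b) \<Longrightarrow> (\<forall>c a. \<psi> (smult c a) = sl2_scale c (\<psi> a))
    \<Longrightarrow> (\<forall>s. \<exists>w\<in>V. \<psi> s - w \<in> S2.span S) \<Longrightarrow> \<exists>s. s \<noteq> 0 \<and> \<psi> s \<in> V"
  using assms
proof (induction S arbitrary: V \<psi> rule: finite_induct)
  case empty
  then obtain w where "w \<in> V" "\<psi> 1 - w \<in> S2.span {}" by blast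
  then show ?case by (intro exI[of _ 1]) auto
next
  case (insert u S)
  note sub = insert.prems(1) and lin = insert.prems(2,3)
  define V' where "V' = {w + sl2_scale k u | w k. w \<in> V}"
  have subV': "S2.subspace V'"
    unfolding S2.subspace_def V'_def
  proof (intro conjI ballI allI)
    show "0 \<in> {w + sl2_scale k u |w k. w \<in> V}"
      using S2.subspace_0[OF sub] by (intro CollectI exI[of _ 0] exI[of _ "0::complex"]) auto
  next
    fix x y assume "x \<in> {w + sl2_scale k u |w k. w \<in> V}" "y \<in> {w + sl2_scale k u |w k. w \<in> V}"
    then obtain w1 k1 w2 k2 where "x = w1 + sl2_scale k1 u" "y = w2 + sl2_scale k2 u" "w1 \<in> V" "w2 \<in> V"
      by blast
    then show "x + y \<in> {w + sl2_scale k u |w k. w \<in> V}"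
      using S2.subspace_add[OF sub]
      by (intro CollectI exI[of _ "w1 + w2"] exI[of _ "k1 + k2"]) (auto simp: S2.scale_left_distrib)
  next
    fix c x assume "x \<in> {w + sl2_scale k u |w k. w \<in> V}"
    then obtain w1 k1 where "x = w1 + sl2_scale k1 u" "w1 \<in> V" by blast
    then show "sl2_scale c x \<in> {w + sl2_scale k u |w k. w \<in> V}"
      using S2.subspace_scale[OF sub]
      by (intro CollectI exI[of _ "sl2_scale c w1"] exI[of _ "c * k1"]) (auto simp: S2.scale_right_distrib)
  qed
  have red: "\<forall>s. \<exists>w\<in>V'. \<phi> s - w \<in> S2.span S" if H: "\<forall>s. \<exists>w\<in>V. \<phi> s - w \<in> S2.span (insert u S)" for \<phi>
  proof
    fix s
    obtain w where w: "w \<in> V" "\<phi> s - w \<in> S2.span (insert u S)" using H by blast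
    then obtain k where "\<phi> s - w - sl2_scale k u \<in> S2.span S" by (auto simp: S2.span_insert)
    moreover have "w + sl2_scale k u \<in> V'" using w unfolding V'_def by blast
    ultimately show "\<exists>w\<in>V'. \<phi> s - w \<in> S2.span S" by (metis diff_diff_eq)
  qed
  have dif: "\<psi> (a - b) = \<psi> a - \<psi> b" for a b
    using lin(1) by (metis add_diff_cancel diff_add_cancel eq_diff_eq)
  obtain s1 where s1: "s1 \<noteq> 0" "\<psi> s1 \<in> V'"
    using insert.IH[OF subV' lin red[OF insert.prems(4)]] by blast
  then obtain w1 \<alpha> where w1: "w1 \<in> V" "\<psi> s1 = w1 + sl2_scale \<alpha> u" unfolding V'_def by blast
  define N where "N = Suc (degree s1)"
  define \<psi>' where "\<psi>' = (\<lambda>t. \<psi> (monom 1 N * t))"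
  have lin': "\<forall>a b. \<psi>' (a + b) = \<psi>' a + \<psi>' b" "\<forall>c a. \<psi>' (smult c a) = sl2_scale c (\<psi>' a)"
    unfolding \<psi>'_def using lin by (auto simp: algebra_simps)
  have "\<forall>s. \<exists>w\<in>V. \<psi>' s - w \<in> S2.span (insert u S)"
    unfolding \<psi>'_def using insert.prems(4) by blast
  then obtain t where t: "t \<noteq> 0" "\<psi>' t \<in> V'"
    using insert.IH[OF subV' lin' red] by blast
  then obtain w2 \<beta> where w2: "w2 \<in> V" "\<psi>' t = w2 + sl2_scale \<beta> u" unfolding V'_def by blast
  show ?case
  proof (cases "\<alpha> = 0 \<or> \<beta> = 0")
    case True
    then show ?thesis
    proof
      assume "\<alpha> = 0" then show ?thesis using s1 w1 by (intro exI[of _ s1]) auto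
    next
      assume "\<beta> = 0" then show ?thesis using t w2 unfolding \<psi>'_def
        by (intro exI[of _ "monom 1 N * t"]) auto
    qed
  next
    case False
    define s where "s = smult \<beta> s1 - smult \<alpha> (monom 1 N * t)"
    have "\<psi> s = sl2_scale \<beta> (w1 + sl2_scale \<alpha> u) - sl2_scale \<alpha> (w2 + sl2_scale \<beta> u)"
      unfolding s_def dif using lin w1 w2 unfolding \<psi>'_def by simp
    also have "\<dots> = sl2_scale \<beta> w1 - sl2_scale \<alpha> w2"
      by (simp add: S2.scale_right_distrib mult.commute)
    also have "\<dots> \<in> V"
      using w1 w2 sub by (intro S2.subspace_diff S2.subspace_scale) auto
    finally have inV: "\<psi> s \<in> V" .
    have "s \<noteq> 0"
    proof
      assume "s = 0"
      then have eq: "smult \<beta> s1 = smult \<alpha> (monom 1 N * t)" unfolding s_def by simp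
      have "degree (smult \<alpha> (monom 1 N * t)) = N + degree t"
        using False t by (simp add: degree_mult_eq degree_monom_eq)
      moreover have "degree (smult \<beta> s1) < N" using False N_def by simp
      ultimately show False using eq by simp
    qed
    then show ?thesis using inV by blast
  qed
qed



definition pm :: "complex poly \<Rightarrow> sl2 \<Rightarrow> sl2" where
  "pm r x = (case x of (a, b, c) \<Rightarrow> (r * a, r * b, r * c))"

lemma pm_simp[simp]: "pm r (a, b, c) = (r * a, r * b, r * c)"
  by (simp add: pm_def)

lemma br_simp[simp]: "sl2_bracket (a, b, c) (a', b', c') =
   (b * c' - c * b', smult 2 (a * b' - b * a'), smult (-2) (a * c' - c * a'))"
  by (simp add: sl2_bracket_def)

lemma triple_zero: "(0::sl2) = (0, 0, 0)"
  by (simp add: zero_prod_def)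

lemma fin_codim_trans: "fin_codim K L \<Longrightarrow> fin_codim L M \<Longrightarrow> fin_codim K M"
  unfolding fin_codim_iff
proof (elim conjE exE, intro conjI)
  fix S1 S2
  assume KL: "K \<subseteq> L" and LM: "L \<subseteq> M" and S1: "finite S1" "S1 \<subseteq> L" "\<forall>v\<in>L. \<exists>w\<in>K. v - w \<in> S2.span S1"
    and S2: "finite S2" "S2 \<subseteq> M" "\<forall>v\<in>M. \<exists>w\<in>L. v - w \<in> S2.span S2"
  show "K \<subseteq> M" using KL LM by blast
  show "\<exists>S. finite S \<and> S \<subseteq> M \<and> (\<forall>v\<in>M. \<exists>w\<in>K. v - w \<in> S2.span S)"
  proof (intro exI[of _ "S1 \<union> S2"] conjI ballI)
    show "finite (S1 \<union> S2)" using S1 S2 by simp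
    show "S1 \<union> S2 \<subseteq> M" using S1 S2 LM by blast
    fix v assume "v \<in> M"
    then obtain l where l: "l \<in> L" "v - l \<in> S2.span S2" using S2 by blast
    then obtain w where w: "w \<in> K" "l - w \<in> S2.span S1" using S1 by blast
    have "v - w = (v - l) + (l - w)" by simp
    also have "\<dots> \<in> S2.span (S1 \<union> S2)"
      using l w S2.span_mono[of S1 "S1 \<union> S2"] S2.span_mono[of S2 "S1 \<union> S2"]
      by (intro S2.span_add) auto
    finally show "\<exists>w\<in>K. v - w \<in> S2.span (S1 \<union> S2)" using w by blast
  qed
qed

lemma descent_core:
  assumes "finite S" and subK: "S2.subspace K"
  shows "\<forall>L. S2.subspace L \<longrightarrow> K \<subseteq> L \<longrightarrow> (\<forall>v\<in>L. \<exists>w\<in>K. v - w \<in> S2.span S)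
     \<longrightarrow> (\<exists>S'. finite S' \<and> S' \<subseteq> L \<and> (\<forall>v\<in>L. \<exists>w\<in>K. v - w \<in> S2.span S'))"
  using assms(1)
proof (induction S rule: finite_induct)
  case empty
  show ?case by (intro allI impI exI[of _ "{}"]) auto
next
  case (insert u S)
  show ?case
  proof (intro allI impI)
    fix L assume subL: "S2.subspace L" and KL: "K \<subseteq> L"
      and H: "\<forall>v\<in>L. \<exists>w\<in>K. v - w \<in> S2.span (insert u S)"
    define M where "M = {v. \<exists>w\<in>K. v - w \<in> S2.span S}"
    have subM: "S2.subspace M"
      unfolding S2.subspace_def M_def
    proof (intro conjI ballI allI)
      show "0 \<in> {v. \<exists>w\<in>K. v - w \<in> S2.span S}"
        using S2.subspace_0[OF subK] by (auto intro!: bexI[of _ 0] S2.span_zero)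
    next
      fix x y assume "x \<in> {v. \<exists>w\<in>K. v - w \<in> S2.span S}" "y \<in> {v. \<exists>w\<in>K. v - w \<in> S2.span S}"
      then obtain w1 w2 where "w1 \<in> K" "w2 \<in> K" "x - w1 \<in> S2.span S" "y - w2 \<in> S2.span S" by blast
      note h = this
      have "x + y - (w1 + w2) = (x - w1) + (y - w2)" by simp
      also have "\<dots> \<in> S2.span S" using h by (intro S2.span_add)
      finally have "x + y - (w1 + w2) \<in> S2.span S" .
      moreover have "w1 + w2 \<in> K" using h S2.subspace_add[OF subK] by blast
      ultimately show "x + y \<in> {v. \<exists>w\<in>K. v - w \<in> S2.span S}" by blast
    next
      fix c x assume "x \<in> {v. \<exists>w\<in>K. v - w \<in> S2.span S}"
      then obtain w1 where "w1 \<in> K" "x - w1 \<in> S2.span S" by blast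
      moreover have "sl2_scale c x - sl2_scale c w1 = sl2_scale c (x - w1)"
        by (simp add: S2.scale_right_diff_distrib)
      ultimately have "sl2_scale c x - sl2_scale c w1 \<in> S2.span S" "sl2_scale c w1 \<in> K"
        using S2.subspace_scale[OF subK] S2.span_scale by metis+
      then show "sl2_scale c x \<in> {v. \<exists>w\<in>K. v - w \<in> S2.span S}" by blast
    qed
    have KM: "K \<subseteq> M" unfolding M_def using S2.span_zero by force
    obtain S'' where S'': "finite S''" "S'' \<subseteq> L \<inter> M" "\<forall>v\<in>L \<inter> M. \<exists>w\<in>K. v - w \<in> S2.span S''"
      using insert.IH[rule_format, of "L \<inter> M"] S2.subspace_inter[OF subL subM] KL KM
      unfolding M_def by blast
    show "\<exists>S'. finite S' \<and> S' \<subseteq> L \<and> (\<forall>v\<in>L. \<exists>w\<in>K. v - w \<in> S2.span S')"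
    proof (cases "L \<subseteq> M")
      case True
      then show ?thesis using S'' by (intro exI[of _ S'']) auto
    next
      case False
      then obtain v0 where v0: "v0 \<in> L" "v0 \<notin> M" by blast
      then obtain w0 k0 where w0: "w0 \<in> K" "v0 - w0 - sl2_scale k0 u \<in> S2.span S"
        using H by (auto simp: S2.span_insert)
      have k0: "k0 \<noteq> 0" using w0 v0 unfolding M_def by auto
      show ?thesis
      proof (intro exI[of _ "insert v0 S''"] conjI ballI)
        show "finite (insert v0 S'')" using S'' by simp
        show "insert v0 S'' \<subseteq> L" using S'' v0 by blast
        fix v assume v: "v \<in> L"
        then obtain w k where w: "w \<in> K" "v - w - sl2_scale k u \<in> S2.span S"
          using H by (auto simp: S2.span_insert)
        define t where "t = k / k0"
        have "(v - sl2_scale t v0) - (w - sl2_scale t w0)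
            = (v - w - sl2_scale k u) - sl2_scale t (v0 - w0 - sl2_scale k0 u)"
          using k0 by (simp add: t_def S2.scale_right_diff_distrib algebra_simps)
        also have "\<dots> \<in> S2.span S"
          using S2.span_diff[OF w(2) S2.span_scale[OF w0(2)]] .
        finally have "v - sl2_scale t v0 \<in> M"
          unfolding M_def using w w0 S2.subspace_diff[OF subK] S2.subspace_scale[OF subK] by blast
        moreover have "v - sl2_scale t v0 \<in> L"
          using v v0 subL by (intro S2.subspace_diff S2.subspace_scale) auto
        ultimately obtain w' where w': "w' \<in> K" "v - sl2_scale t v0 - w' \<in> S2.span S''"
          using S'' by blast
        have "v - w' \<in> S2.span (insert v0 S'')"
          unfolding S2.span_insert using w' by (intro CollectI exI[of _ t]) (simp add: algebra_simps)
        then show "\<exists>w\<in>K. v - w \<in> S2.span (insert v0 S'')" using w' by blast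
      qed
    qed
  qed
qed

lemma fin_codim_down:
  assumes "S2.subspace K" "S2.subspace L" "K \<subseteq> L" "L \<subseteq> M" "fin_codim K M"
  shows "fin_codim K L"
proof -
  obtain S where "finite S" "\<forall>v\<in>M. \<exists>w\<in>K. v - w \<in> S2.span S"
    using assms(5) unfolding fin_codim_iff by blast
  then show ?thesis
    using descent_core[OF \<open>finite S\<close> assms(1), rule_format, of L] assms(2-4)
    unfolding fin_codim_iff by blast
qed



lemma ideal_in:
  assumes lie: "lie_subalg K" and fc: "fin_codim K UNIV"
  shows "\<exists>q. q \<noteq> 0 \<and> (\<forall>y. pm q y \<in> K)"
proof -
  have sub: "S2.subspace K" using lie by (simp add: lie_subalg_def subspace_sl2_eq)
  have brK: "x \<in> K \<Longrightarrow> y \<in> K \<Longrightarrow> sl2_bracket x y \<in> K" for x y using lie by (simp add: lie_subalg_def)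
  obtain S where S: "finite S" "\<forall>v. \<exists>w\<in>K. v - w \<in> S2.span S"
    using fc unfolding fin_codim_iff by blast
  have pigK: "\<exists>s. s \<noteq> 0 \<and> \<psi> s \<in> K"
    if "\<forall>a b. \<psi> (a + b) = \<psi> a + \<psi> b" "\<forall>c a. \<psi> (smult c a) = sl2_scale c (\<psi> a)" for \<psi>
    using pig[OF S(1) sub that] S(2) by blast
  have Kadd: "x \<in> K \<Longrightarrow> y \<in> K \<Longrightarrow> x + y \<in> K" for x y using S2.subspace_add[OF sub] by blast
  have Ksc: "x \<in> K \<Longrightarrow> sl2_scale c x \<in> K" for x c using S2.subspace_scale[OF sub] by blast
  have K0: "(0, 0, 0) \<in> K" using S2.subspace_0[OF sub] by (simp add: triple_zero)
  obtain s0 where s0: "s0 \<noteq> 0" "(monom 1 1 * s0, 0, 0) \<in> K"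
    using pigK[of "\<lambda>s. (monom 1 1 * s, 0, 0)"] by (auto simp: algebra_simps)
  define u where "u = monom 1 1 * s0"
  have du: "degree u \<ge> 1" using s0 by (simp add: u_def degree_mult_eq degree_monom_eq)
  have uK: "(u, 0, 0) \<in> K" using s0 u_def by simp
  define JE where "JE = {b. (0, b, 0) \<in> K}"
  have "\<exists>P. P \<noteq> 0 \<and> (\<forall>r. P * r \<in> JE)"
  proof (rule line_ideal[of JE u])
    show "0 \<in> JE" using K0 by (simp add: JE_def)
    show "\<forall>x\<in>JE. \<forall>y\<in>JE. x + y \<in> JE" using Kadd by (fastforce simp: JE_def)
    show "\<forall>c. \<forall>x\<in>JE. smult c x \<in> JE" using Ksc by (fastforce simp: JE_def)
    show "degree u \<ge> 1" by (rule du)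
    show "\<forall>x\<in>JE. u * x \<in> JE"
    proof
      fix x assume "x \<in> JE"
      then have "(0, x, 0) \<in> K" by (simp add: JE_def)
      then have "sl2_bracket (u, 0, 0) (0, x, 0) \<in> K" by (rule brK[OF uK])
      then have "sl2_scale (1/2) (sl2_bracket (u, 0, 0) (0, x, 0)) \<in> K" by (rule Ksc)
      then show "u * x \<in> JE" by (simp add: JE_def)
    qed
    fix \<psi> :: "complex poly \<Rightarrow> complex poly"
    assume "\<forall>a b. \<psi> (a + b) = \<psi> a + \<psi> b" "\<forall>c a. \<psi> (smult c a) = smult c (\<psi> a)"
    then show "\<exists>s. s \<noteq> 0 \<and> \<psi> s \<in> JE"
      using pigK[of "\<lambda>s. (0, \<psi> s, 0)"] by (simp add: JE_def)
  qed
  then obtain PE where PE: "PE \<noteq> 0" "\<And>r. (0, PE * r, 0) \<in> K" unfolding JE_def by blast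
  define JF where "JF = {b. (0, 0, b) \<in> K}"
  have "\<exists>P. P \<noteq> 0 \<and> (\<forall>r. P * r \<in> JF)"
  proof (rule line_ideal[of JF u])
    show "0 \<in> JF" using K0 by (simp add: JF_def)
    show "\<forall>x\<in>JF. \<forall>y\<in>JF. x + y \<in> JF" using Kadd by (fastforce simp: JF_def)
    show "\<forall>c. \<forall>x\<in>JF. smult c x \<in> JF" using Ksc by (fastforce simp: JF_def)
    show "degree u \<ge> 1" by (rule du)
    show "\<forall>x\<in>JF. u * x \<in> JF"
    proof
      fix x assume "x \<in> JF"
      then have "(0, 0, x) \<in> K" by (simp add: JF_def)
      then have "sl2_bracket (u, 0, 0) (0, 0, x) \<in> K" by (rule brK[OF uK])
      then have "sl2_scale (-1/2) (sl2_bracket (u, 0, 0) (0, 0, x)) \<in> K" by (rule Ksc)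
      then show "u * x \<in> JF" by (simp add: JF_def)
    qed
    fix \<psi> :: "complex poly \<Rightarrow> complex poly"
    assume "\<forall>a b. \<psi> (a + b) = \<psi> a + \<psi> b" "\<forall>c a. \<psi> (smult c a) = smult c (\<psi> a)"
    then show "\<exists>s. s \<noteq> 0 \<and> \<psi> s \<in> JF"
      using pigK[of "\<lambda>s. (0, 0, \<psi> s)"] by (simp add: JF_def)
  qed
  then obtain PF where PF: "PF \<noteq> 0" "\<And>r. (0, 0, PF * r) \<in> K" unfolding JF_def by blast
  have H: "(PE * PF * r, 0, 0) \<in> K" for r
  proof -
    have "sl2_bracket (0, PE * r, 0) (0, 0, PF) \<in> K" using brK[OF PE(2)[of r] PF(2)[of 1]] by simp
    then show ?thesis by (simp add: algebra_simps)
  qed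
  show ?thesis
  proof (intro exI[of _ "PE * PF"] conjI allI)
    show "PE * PF \<noteq> 0" using PE PF by simp
    fix y :: sl2
    obtain a b c where y: "y = (a, b, c)" by (cases y) auto
    have "pm (PE * PF) y = (PE * PF * a, 0, 0) + ((0, PE * (PF * b), 0) + (0, 0, PF * (PE * c)))"
      by (simp add: y algebra_simps)
    also have "\<dots> \<in> K" using Kadd[OF H Kadd[OF PE(2) PF(2)]] .
    finally show "pm (PE * PF) y \<in> K" .
  qed
qed

definition Iq :: "complex poly \<Rightarrow> sl2 set" where "Iq q = range (pm q)"

lemma pm_add: "pm q (x + y) = pm q x + pm q y"
  by (cases x; cases y) (simp add: algebra_simps)

lemma pm_scale: "pm q (sl2_scale c x) = sl2_scale c (pm q x)"
  by (cases x) simp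

lemma pm_pm: "pm p (pm q x) = pm (p * q) x"
  by (cases x) (simp add: algebra_simps)

lemma pm_br: "sl2_bracket (pm p x) (pm q y) = pm (p * q) (sl2_bracket x y)"
  by (cases x; cases y) (simp add: algebra_simps)

lemma Iq_lie: "lie_subalg (Iq q)"
  unfolding lie_subalg_def subspace_sl2_eq S2.subspace_def Iq_def
proof (intro conjI ballI allI)
  show "0 \<in> range (pm q)" by (rule range_eqI[of _ _ 0]) (simp add: triple_zero)
next
  fix x y assume "x \<in> range (pm q)" "y \<in> range (pm q)"
  then obtain x' y' where "x = pm q x'" "y = pm q y'" by blast
  then have "x + y = pm q (x' + y')" "sl2_bracket x y = pm q (pm q (sl2_bracket x' y'))"
    by (simp_all add: pm_add pm_br pm_pm)
  then show "x + y \<in> range (pm q)" "sl2_bracket x y \<in> range (pm q)" by auto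
next
  fix c x assume "x \<in> range (pm q)"
  then obtain x' where "x = pm q x'" by blast
  then show "sl2_scale c x \<in> range (pm q)" by (auto simp: pm_scale[symmetric])
qed

lemma mod_span:
  assumes "degree r \<le> n"
  shows "(r, 0, 0) \<in> S2.span (\<Union>i\<le>n. {(monom 1 i, 0, 0), (0, monom 1 i, 0), (0, 0, monom 1 i)})"
    and "(0, r, 0) \<in> S2.span (\<Union>i\<le>n. {(monom 1 i, 0, 0), (0, monom 1 i, 0), (0, 0, monom 1 i)})"
    and "(0, 0, r) \<in> S2.span (\<Union>i\<le>n. {(monom 1 i, 0, 0), (0, monom 1 i, 0), (0, 0, monom 1 i)})"
proof -
  let ?B = "\<Union>i\<le>n. {(monom 1 i, 0, 0), (0, monom 1 i, 0), (0, 0, monom 1 i)} :: sl2 set"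
  have r: "r = (\<Sum>i\<le>n. monom (coeff r i) i)"
    using assms by (simp add: poly_as_sum_of_monoms')
  have m: "monom (coeff r i) i = smult (coeff r i) (monom 1 i)" for i by (simp add: smult_monom)
  have "(r, 0, 0) = (\<Sum>i\<le>n. sl2_scale (coeff r i) (monom 1 i, 0, 0))"
    by (subst r) (simp add: sum_prod m)
  also have "\<dots> \<in> S2.span ?B" by (intro S2.span_sum S2.span_scale S2.span_base) auto
  finally show "(r, 0, 0) \<in> S2.span ?B" .
  have "(0, r, 0) = (\<Sum>i\<le>n. sl2_scale (coeff r i) (0, monom 1 i, 0))"
    by (subst r) (simp add: sum_prod m)
  also have "\<dots> \<in> S2.span ?B" by (intro S2.span_sum S2.span_scale S2.span_base) auto
  finally show "(0, r, 0) \<in> S2.span ?B" .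
  have "(0, 0, r) = (\<Sum>i\<le>n. sl2_scale (coeff r i) (0, 0, monom 1 i))"
    by (subst r) (simp add: sum_prod m)
  also have "\<dots> \<in> S2.span ?B" by (intro S2.span_sum S2.span_scale S2.span_base) auto
  finally show "(0, 0, r) \<in> S2.span ?B" .
qed

lemma Iq_codim_univ:
  assumes "q \<noteq> 0"
  shows "fin_codim (Iq q) UNIV"
  unfolding fin_codim_iff
proof (intro conjI exI[of _ "\<Union>i\<le>degree q. {(monom 1 i, 0, 0), (0, monom 1 i, 0), (0, 0, monom 1 i)}"] ballI)
  let ?B = "\<Union>i\<le>degree q. {(monom 1 i, 0, 0), (0, monom 1 i, 0), (0, 0, monom 1 i)} :: sl2 set"
  show "finite ?B" by simp
  show "Iq q \<subseteq> UNIV" "?B \<subseteq> UNIV" by auto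
  fix v :: sl2
  obtain a b c where v: "v = (a, b, c)" by (cases v) auto
  have d: "degree (x mod q) \<le> degree q" for x
    using degree_mod_less[OF assms, of x] by auto
  have "v - pm q (a div q, b div q, c div q) = (a mod q, b mod q, c mod q)"
    by (simp only: v pm_simp diff_Pair minus_mult_div_eq_mod)
  also have "\<dots> = (a mod q, 0, 0) + ((0, b mod q, 0) + (0, 0, c mod q))"
    by simp
  also have "\<dots> \<in> S2.span ?B" using mod_span[OF d] by (intro S2.span_add)
  finally show "\<exists>w\<in>Iq q. v - w \<in> S2.span ?B" unfolding Iq_def by blast
qed

lemma Iq_codim:
  assumes "q \<noteq> 0" "Iq q \<subseteq> L" "S2.subspace L"
  shows "fin_codim (Iq q) L"
  using fin_codim_down[OF _ assms(3,2) _ Iq_codim_univ[OF assms(1)]] Iq_lie[of q]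
  by (simp add: lie_subalg_def subspace_sl2_eq)

lemma Iq_mono: "Iq (p * q) \<subseteq> Iq p"
  unfolding Iq_def using pm_pm by (metis image_subset_iff rangeI)



lemma smult_cancel_c[simp]: "(c::complex) \<noteq> 0 \<Longrightarrow> smult c x = smult c y \<longleftrightarrow> x = y"
proof
  assume c: "c \<noteq> 0" and "smult c x = smult c y"
  then have "smult (inverse c) (smult c x) = smult (inverse c) (smult c y)" by simp
  then show "x = y" using c by simp
qed simp

lemma br_pm_right: "sl2_bracket x (pm q y) = pm q (sl2_bracket x y)"
  by (cases x; cases y) (simp add: algebra_simps)

lemma br_pm_left: "sl2_bracket (pm q x) y = pm q (sl2_bracket x y)"
  by (cases x; cases y) (simp add: algebra_simps)

lemma centroid:
  assumes adm: "admissible L (h, hh)" and q: "q \<noteq> 0" and I: "\<And>y. pm q y \<in> hh"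
  shows "\<exists>A. \<forall>x\<in>hh. pm q (h x) = pm A x"
proof -
  have sub: "S2.subspace hh"
    and add: "\<And>x y. x \<in> hh \<Longrightarrow> y \<in> hh \<Longrightarrow> h (x + y) = h x + h y"
    and sc: "\<And>k x. x \<in> hh \<Longrightarrow> h (sl2_scale k x) = sl2_scale k (h x)"
    and br1: "\<And>x y. x \<in> hh \<Longrightarrow> y \<in> hh \<Longrightarrow> h (sl2_bracket x y) = sl2_bracket (h x) y"
    and br2: "\<And>x y. x \<in> hh \<Longrightarrow> y \<in> hh \<Longrightarrow> h (sl2_bracket x y) = sl2_bracket x (h y)"
  proof -
    from adm have ad: "lie_subalg hh" "\<forall>x\<in>hh. \<forall>y\<in>hh. h (x + y) = h x + h y"
      "\<forall>k. \<forall>x\<in>hh. h (sl2_scale k x) = sl2_scale k (h x)"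
      "\<forall>p1\<in>hh. \<forall>p2\<in>hh. h (sl2_bracket p1 p2) = sl2_bracket (h p1) p2 \<and> h (sl2_bracket p1 p2) = sl2_bracket p1 (h p2)"
      unfolding admissible_def sl2_add_fun by (simp_all only: prod.case) blast+
    show "S2.subspace hh" using ad(1) by (simp add: lie_subalg_def subspace_sl2_eq)
    show "\<And>x y. x \<in> hh \<Longrightarrow> y \<in> hh \<Longrightarrow> h (x + y) = h x + h y" using ad(2) by blast
    show "\<And>k x. x \<in> hh \<Longrightarrow> h (sl2_scale k x) = sl2_scale k (h x)" using ad(3) by blast
    show "\<And>x y. x \<in> hh \<Longrightarrow> y \<in> hh \<Longrightarrow> h (sl2_bracket x y) = sl2_bracket (h x) y" using ad(4) by blast
    show "\<And>x y. x \<in> hh \<Longrightarrow> y \<in> hh \<Longrightarrow> h (sl2_bracket x y) = sl2_bracket x (h y)" using ad(4) by blast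
  qed
  have mem: "(q * a, q * b, q * c) \<in> hh" for a b c using I[of "(a, b, c)"] by simp
  have mH: "(q * a, 0, 0) \<in> hh" for a using mem[of a 0 0] by simp
  have mE: "(0, q * a, 0) \<in> hh" for a using mem[of 0 a 0] by simp
  have mF: "(0, 0, q * a) \<in> hh" for a using mem[of 0 0 a] by simp
  have m1: "(q, 0, 0) \<in> hh" using mH[of 1] by simp
  have h0: "h (0, 0, 0) = (0, 0, 0)"
  proof -
    have z: "(0, 0, 0) \<in> hh" using S2.subspace_0[OF sub] by (simp add: triple_zero)
    have "h (0, 0, 0) = h (sl2_scale 0 (0, 0, 0))" by simp
    also have "\<dots> = sl2_scale 0 (h (0, 0, 0))" by (rule sc[OF z])
    also have "\<dots> = (0, 0, 0)" by (simp add: triple_zero[symmetric])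
    finally show ?thesis .
  qed
  have self: "sl2_bracket (h z) z = (0, 0, 0)" if "z \<in> hh" for z
  proof -
    have "sl2_bracket z z = (0, 0, 0)" by (cases z) (simp add: mult.commute)
    then show ?thesis using br1[OF that that] h0 by simp
  qed
  obtain A b0 c0 where hq: "h (q, 0, 0) = (A, b0, c0)" by (cases "h (q, 0, 0)") auto
  from self[OF m1] hq q have b0: "b0 = 0" and c0: "c0 = 0" by auto
  have hE: "h (0, q * r, 0) = (0, A * r, 0)" for r
  proof (cases "r = 0")
    case True then show ?thesis using h0 by simp
  next
    case False
    obtain \<alpha> \<beta> \<gamma> where e: "h (0, q * r, 0) = (\<alpha>, \<beta>, \<gamma>)" by (cases "h (0, q * r, 0)") auto
    from self[OF mE[of r]] e q False have \<alpha>: "\<alpha> = 0" and \<gamma>: "\<gamma> = 0" by auto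
    have "sl2_bracket (h (q, 0, 0)) (0, q * r, 0) = sl2_bracket (q, 0, 0) (h (0, q * r, 0))"
      using br1[OF m1 mE[of r]] br2[OF m1 mE[of r]] by simp
    then have "q * \<beta> = q * (A * r)" using hq e \<alpha> \<gamma> b0 c0 by (simp add: algebra_simps) (metis mult.commute)?
    then show ?thesis using e \<alpha> \<gamma> q by simp
  qed
  have hF: "h (0, 0, q * r) = (0, 0, A * r)" for r
  proof (cases "r = 0")
    case True then show ?thesis using h0 by simp
  next
    case False
    obtain \<alpha> \<beta> \<gamma> where e: "h (0, 0, q * r) = (\<alpha>, \<beta>, \<gamma>)" by (cases "h (0, 0, q * r)") auto
    from self[OF mF[of r]] e q False have \<alpha>: "\<alpha> = 0" and \<beta>: "\<beta> = 0" by auto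
    have "sl2_bracket (h (q, 0, 0)) (0, 0, q * r) = sl2_bracket (q, 0, 0) (h (0, 0, q * r))"
      using br1[OF m1 mF[of r]] br2[OF m1 mF[of r]] by simp
    then have "q * \<gamma> = q * (A * r)" using hq e \<alpha> \<beta> b0 c0 by (simp add: algebra_simps) (metis mult.commute)?
    then show ?thesis using e \<alpha> \<beta> q by simp
  qed
  have hH: "h (q * r, 0, 0) = (A * r, 0, 0)" for r
  proof (cases "r = 0")
    case True then show ?thesis using h0 by simp
  next
    case False
    obtain \<alpha> \<beta> \<gamma> where e: "h (q * r, 0, 0) = (\<alpha>, \<beta>, \<gamma>)" by (cases "h (q * r, 0, 0)") auto
    from self[OF mH[of r]] e q False have \<beta>: "\<beta> = 0" and \<gamma>: "\<gamma> = 0" by auto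
    have q1: "h (0, q, 0) = (0, A, 0)" using hE[of 1] by simp
    have "sl2_bracket (h (q * r, 0, 0)) (0, q, 0) = sl2_bracket (q * r, 0, 0) (h (0, q, 0))"
      using br1[OF mH[of r] mE[of 1]] br2[OF mH[of r] mE[of 1]] by simp
    then have "q * \<alpha> = q * (A * r)" using q1 e \<beta> \<gamma> by (simp add: algebra_simps) (metis mult.commute)?
    then show ?thesis using e \<beta> \<gamma> q by simp
  qed
  have hI: "h (pm q y) = pm A y" for y
  proof -
    obtain a b c where y: "y = (a, b, c)" by (cases y) auto
    have "pm q y = (q * a, 0, 0) + ((0, q * b, 0) + (0, 0, q * c))" by (simp add: y)
    then have "h (pm q y) = h (q * a, 0, 0) + (h (0, q * b, 0) + h (0, 0, q * c))"
      using add mH mE mF S2.subspace_add[OF sub] by metis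
    then show ?thesis by (simp add: y hE hF hH)
  qed
  show ?thesis
  proof (intro exI[of _ A] ballI)
    fix x assume x: "x \<in> hh"
    have key: "pm A (sl2_bracket x y0) = pm q (sl2_bracket (h x) y0)" for y0
    proof -
      have "pm A (sl2_bracket x y0) = h (pm q (sl2_bracket x y0))" by (simp add: hI)
      also have "\<dots> = h (sl2_bracket x (pm q y0))" by (simp add: br_pm_right)
      also have "\<dots> = sl2_bracket (h x) (pm q y0)" using br1[OF x I] .
      also have "\<dots> = pm q (sl2_bracket (h x) y0)" by (simp add: br_pm_right)
      finally show ?thesis .
    qed
    obtain a b c where xe: "x = (a, b, c)" by (cases x) auto
    obtain a' b' c' where hx: "h x = (a', b', c')" by (cases "h x") auto
    have k1: "pm A (sl2_bracket (a, b, c) (1, 0, 0)) = pm q (sl2_bracket (a', b', c') (1, 0, 0))"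
      using key[of "(1, 0, 0)"] unfolding hx unfolding xe .
    have k2: "pm A (sl2_bracket (a, b, c) (0, 1, 0)) = pm q (sl2_bracket (a', b', c') (0, 1, 0))"
      using key[of "(0, 1, 0)"] unfolding hx unfolding xe .
    from k1 have e1: "A * b = q * b'" "A * c = q * c'" by simp_all
    from k2 have e2: "A * a = q * a'" by simp
    show "pm q (h x) = pm A x" using e1 e2 unfolding hx unfolding xe by simp
  qed
qed



definition tf :: "complex poly \<Rightarrow> complex poly fract" where "tf a = Fract a 1"

lemma tf_inj[simp]: "tf a = tf b \<longleftrightarrow> a = b"
  by (simp add: tf_def eq_fract)

lemma tf_eq_Fract: "b \<noteq> 0 \<Longrightarrow> tf a = Fract c b \<longleftrightarrow> a * b = c"
  by (simp add: tf_def eq_fract)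

lemma tf_add: "tf (a + b) = tf a + tf b" by (simp add: tf_def)
lemma tf_mult: "tf (a * b) = tf a * tf b" by (simp add: tf_def)
lemma tf_zero_iff[simp]: "tf a = 0 \<longleftrightarrow> a = 0" by (simp add: tf_def Zero_fract_def eq_fract)

definition fx :: "complex poly fract \<Rightarrow> sl2 \<Rightarrow> sl2 \<Rightarrow> bool" where
  "fx f x y \<longleftrightarrow> (case x of (a, b, c) \<Rightarrow> case y of (a', b', c') \<Rightarrow>
      tf a' = f * tf a \<and> tf b' = f * tf b \<and> tf c' = f * tf c)"

lemma fx_simp[simp]: "fx f (a, b, c) (a', b', c') \<longleftrightarrow> tf a' = f * tf a \<and> tf b' = f * tf b \<and> tf c' = f * tf c"
  by (simp add: fx_def)

lemma fx_unique: "fx f x y1 \<Longrightarrow> fx f x y2 \<Longrightarrow> y1 = y2"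
  by (cases x; cases y1; cases y2) (simp only: fx_simp prod.inject, metis tf_inj)

lemma fx_pm: "q \<noteq> 0 \<Longrightarrow> pm q y = pm A x \<Longrightarrow> fx (Fract A q) x y"
  by (cases x; cases y) (simp add: tf_def eq_fract algebra_simps)

lemma fx_scale: "fx f x y \<Longrightarrow> fx (Fract [:k:] 1 * f) x (sl2_scale k y)"
proof (cases x; cases y)
  fix a b c a' b' c' assume "fx f x y" "x = (a, b, c)" "y = (a', b', c')"
  moreover have "tf (smult k p) = Fract [:k:] 1 * tf p" for p
    by (simp add: tf_def)
  ultimately show ?thesis by (simp add: mult.assoc)
qed

lemma fx_add: "fx f x y1 \<Longrightarrow> fx g x y2 \<Longrightarrow> fx (f + g) x (y1 + y2)"
  by (cases x; cases y1; cases y2) (simp add: tf_add algebra_simps)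

lemma fx_comp: "fx g x y \<Longrightarrow> fx f y z \<Longrightarrow> fx (f * g) x z"
  by (cases x; cases y; cases z) (simp add: mult.assoc)

lemma fx_surj: "b \<noteq> 0 \<Longrightarrow> fx (Fract a b) (pm (q0 * b) y) (pm (a * q0) y)"
  by (cases y) (simp add: tf_def eq_fract algebra_simps)

definition rep :: "sl2 set \<Rightarrow> sl2_pair \<Rightarrow> complex poly fract \<Rightarrow> bool" where
  "rep L P f \<longleftrightarrow> (\<exists>K. lie_subalg K \<and> fin_codim K L \<and> K \<subseteq> snd P \<and> (\<forall>x\<in>K. fx f x (fst P x)))"

locale LL =
  fixes L :: "sl2 set"
  assumes lieL: "lie_subalg L" and fcL: "fin_codim L UNIV"
begin

lemma subL: "S2.subspace L" using lieL by (simp add: lie_subalg_def subspace_sl2_eq)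

lemma ideal_of: "lie_subalg K \<Longrightarrow> fin_codim K L \<Longrightarrow> \<exists>q. q \<noteq> 0 \<and> Iq q \<subseteq> K"
  using ideal_in[of K] fin_codim_trans[OF _ fcL] unfolding Iq_def by blast

lemma common:
  assumes "lie_subalg K1" "fin_codim K1 L" "lie_subalg K2" "fin_codim K2 L"
  shows "\<exists>q. q \<noteq> 0 \<and> Iq q \<subseteq> K1 \<and> Iq q \<subseteq> K2 \<and> fin_codim (Iq q) L \<and> lie_subalg (Iq q)"
proof -
  obtain q1 q2 where q: "q1 \<noteq> 0" "Iq q1 \<subseteq> K1" "q2 \<noteq> 0" "Iq q2 \<subseteq> K2"
    using ideal_of[OF assms(1,2)] ideal_of[OF assms(3,4)] by blast
  have "Iq (q1 * q2) \<subseteq> Iq q1" "Iq (q1 * q2) \<subseteq> Iq q2"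
    using Iq_mono[of q1 q2] Iq_mono[of q2 q1] by (simp_all add: mult.commute)
  moreover have "K1 \<subseteq> L" using assms(2) by (simp add: fin_codim_def)
  ultimately show ?thesis using q subL Iq_codim[of "q1 * q2" L] Iq_lie[of "q1 * q2"]
    by (intro exI[of _ "q1 * q2"]) auto
qed

lemma R1:
  assumes adm: "admissible L (h, hh)"
  shows "rep L (h, hh) (SOME f. rep L (h, hh) f)"
proof -
  have lh: "lie_subalg hh" and fh: "fin_codim hh L" using adm by (simp_all add: admissible_def)
  obtain q where q: "q \<noteq> 0" "Iq q \<subseteq> hh" using ideal_of[OF lh fh] by blast
  then have "\<And>y. pm q y \<in> hh" unfolding Iq_def by auto
  then obtain A where A: "\<forall>x\<in>hh. pm q (h x) = pm A x" using centroid[OF adm q(1)] by blast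
  have "rep L (h, hh) (Fract A q)"
    unfolding rep_def using lh fh A fx_pm[OF q(1)] by (intro exI[of _ hh]) auto
  then show ?thesis by (rule someI)
qed

lemma R2:
  assumes "rep L P f" "rep L P g" shows "f = g"
proof -
  obtain K1 where K1: "lie_subalg K1" "fin_codim K1 L" "K1 \<subseteq> snd P" "\<forall>x\<in>K1. fx f x (fst P x)"
    using assms(1) unfolding rep_def by blast
  obtain K2 where K2: "lie_subalg K2" "fin_codim K2 L" "K2 \<subseteq> snd P" "\<forall>x\<in>K2. fx g x (fst P x)"
    using assms(2) unfolding rep_def by blast
  obtain q where q: "q \<noteq> 0" "Iq q \<subseteq> K1" "Iq q \<subseteq> K2" using common[OF K1(1,2) K2(1,2)] by blast
  have "pm q (1, 0, 0) \<in> Iq q" unfolding Iq_def by (rule rangeI)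
  then have "(q, 0, 0) \<in> Iq q" by simp
  then have x: "(q, 0, 0) \<in> K1" "(q, 0, 0) \<in> K2" using q(2,3) by blast+
  obtain a' b' c' where y: "fst P (q, 0, 0) = (a', b', c')" by (cases "fst P (q, 0, 0)") auto
  have "tf a' = f * tf q" "tf a' = g * tf q" using K1(4) K2(4) x y by fastforce+
  then show ?thesis using q(1) by simp
qed

lemma Phi_eq: "rep L P f \<Longrightarrow> (SOME f. rep L P f) = f"
  using R2 someI[of "rep L P" f] by blast

lemma R3:
  assumes "rep L P f" "rep L Q f" shows "adm_equiv L P Q"
proof -
  obtain K1 where K1: "lie_subalg K1" "fin_codim K1 L" "K1 \<subseteq> snd P" "\<forall>x\<in>K1. fx f x (fst P x)"
    using assms(1) unfolding rep_def by blast
  obtain K2 where K2: "lie_subalg K2" "fin_codim K2 L" "K2 \<subseteq> snd Q" "\<forall>x\<in>K2. fx f x (fst Q x)"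
    using assms(2) unfolding rep_def by blast
  obtain q where q: "Iq q \<subseteq> K1" "Iq q \<subseteq> K2" "fin_codim (Iq q) L" "lie_subalg (Iq q)"
    using common[OF K1(1,2) K2(1,2)] by blast
  have eq: "fst P x = fst Q x" if "x \<in> Iq q" for x
  proof -
    have "x \<in> K1" "x \<in> K2" using that q by auto
    then have "fx f x (fst P x)" "fx f x (fst Q x)" using K1(4) K2(4) by auto
    then show ?thesis by (rule fx_unique)
  qed
  have "Iq q \<subseteq> snd P \<inter> snd Q" using q(1,2) K1(3) K2(3) by blast
  then show ?thesis unfolding adm_equiv_def using q(3,4) eq by blast
qed

lemma R4:
  assumes "adm_equiv L P Q" "rep L P f" shows "rep L Q f"
proof -
  obtain K0 where K0: "lie_subalg K0" "fin_codim K0 L" "K0 \<subseteq> snd P \<inter> snd Q" "\<forall>x\<in>K0. fst P x = fst Q x"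
    using assms(1) unfolding adm_equiv_def by blast
  obtain K1 where K1: "lie_subalg K1" "fin_codim K1 L" "K1 \<subseteq> snd P" "\<forall>x\<in>K1. fx f x (fst P x)"
    using assms(2) unfolding rep_def by blast
  obtain q where q: "Iq q \<subseteq> K0" "Iq q \<subseteq> K1" "fin_codim (Iq q) L" "lie_subalg (Iq q)"
    using common[OF K0(1,2) K1(1,2)] by blast
  have "fx f x (fst Q x)" if "x \<in> Iq q" for x
  proof -
    have "x \<in> K1" "x \<in> K0" using that q by auto
    then have "fx f x (fst P x)" "fst P x = fst Q x" using K1(4) K0(4) by auto
    then show ?thesis by simp
  qed
  moreover have "Iq q \<subseteq> snd Q" using q(1) K0(3) by blast
  ultimately show ?thesis unfolding rep_def using q(3,4) by blast
qed

lemma R_scale: "rep L P f \<Longrightarrow> rep L (adm_scale k P) (Fract [:k:] 1 * f)"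
proof -
  assume "rep L P f"
  then obtain K1 where K1: "lie_subalg K1" "fin_codim K1 L" "K1 \<subseteq> snd P" "\<forall>x\<in>K1. fx f x (fst P x)"
    unfolding rep_def by blast
  have "\<forall>x\<in>K1. fx (Fract [:k:] 1 * f) x (fst (adm_scale k P) x)"
    using K1(4) fx_scale unfolding adm_scale_def by simp
  moreover have "K1 \<subseteq> snd (adm_scale k P)" using K1(3) by (simp add: adm_scale_def)
  ultimately show ?thesis unfolding rep_def using K1(1,2) by blast
qed

lemma R_add:
  assumes "rep L P f" "rep L Q g" shows "rep L (adm_add P Q) (f + g)"
proof -
  obtain K1 where K1: "lie_subalg K1" "fin_codim K1 L" "K1 \<subseteq> snd P" "\<forall>x\<in>K1. fx f x (fst P x)"
    using assms(1) unfolding rep_def by blast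
  obtain K2 where K2: "lie_subalg K2" "fin_codim K2 L" "K2 \<subseteq> snd Q" "\<forall>x\<in>K2. fx g x (fst Q x)"
    using assms(2) unfolding rep_def by blast
  obtain q where q: "Iq q \<subseteq> K1" "Iq q \<subseteq> K2" "fin_codim (Iq q) L" "lie_subalg (Iq q)"
    using common[OF K1(1,2) K2(1,2)] by blast
  have "fx (f + g) x (fst (adm_add P Q) x)" if "x \<in> Iq q" for x
  proof -
    have "x \<in> K1" "x \<in> K2" using that q by auto
    then have "fx f x (fst P x)" "fx g x (fst Q x)" using K1(4) K2(4) by auto
    then show ?thesis unfolding adm_add_def sl2_add_fun fst_conv by (rule fx_add)
  qed
  moreover have "Iq q \<subseteq> snd (adm_add P Q)" using q(1,2) K1(3) K2(3) by (auto simp: adm_add_def)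
  ultimately show ?thesis unfolding rep_def using q(3,4) by blast
qed

lemma R_mul:
  assumes "rep L P f" "rep L Q g" shows "rep L (adm_mul P Q) (f * g)"
proof -
  obtain K1 where K1: "lie_subalg K1" "fin_codim K1 L" "K1 \<subseteq> snd P" "\<forall>x\<in>K1. fx f x (fst P x)"
    using assms(1) unfolding rep_def by blast
  obtain K2 where K2: "lie_subalg K2" "fin_codim K2 L" "K2 \<subseteq> snd Q" "\<forall>x\<in>K2. fx g x (fst Q x)"
    using assms(2) unfolding rep_def by blast
  obtain q where q: "q \<noteq> 0" "Iq q \<subseteq> K1" "Iq q \<subseteq> K2"
    using common[OF K1(1,2) K2(1,2)] by blast
  obtain a b where g: "g = Fract a b" "b \<noteq> 0" by (cases g) auto
  have sub: "Iq (q * b) \<subseteq> Iq q" by (rule Iq_mono)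
  have K1L: "K1 \<subseteq> L" using K1(2) by (simp add: fin_codim_def)
  have fc: "fin_codim (Iq (q * b)) L" using Iq_codim[of "q * b" L] q sub K1L subL g(2) by auto
  show ?thesis unfolding rep_def
  proof (intro exI[of _ "Iq (q * b)"] conjI ballI subsetI)
    show "lie_subalg (Iq (q * b))" by (rule Iq_lie)
    show "fin_codim (Iq (q * b)) L" by (rule fc)
    fix w assume w: "w \<in> Iq (q * b)"
    then obtain y where wy: "w = pm (q * b) y" unfolding Iq_def by blast
    have wK: "w \<in> K1" "w \<in> K2" using w sub q by auto
    have "fx g w (pm q (pm a y))" unfolding wy g using g(2)
      by (cases y) (simp add: tf_def eq_fract algebra_simps)
    then have qw: "fst Q w = pm q (pm a y)" using fx_unique K2(4) wK by blast
    then have qwK: "fst Q w \<in> K1" using q unfolding Iq_def by auto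
    show "w \<in> snd (adm_mul P Q)" using wK qwK K1(3) K2(3) by (auto simp: adm_mul_def)
    show "fx (f * g) w (fst (adm_mul P Q) w)"
      using fx_comp[of g w "fst Q w" f "fst P (fst Q w)"] K1(4) K2(4) wK qwK
      by (simp add: adm_mul_def)
  qed
qed

lemma R_surj: "\<exists>P. admissible L P \<and> rep L P r"
proof -
  obtain a b where r: "r = Fract a b" "b \<noteq> 0" by (cases r) auto
  have "fin_codim L L" using fin_codim_down[OF subL subL order_refl subset_UNIV fcL] .
  then obtain q0 where q0: "q0 \<noteq> 0" "Iq q0 \<subseteq> L" using ideal_of[OF lieL] by blast
  define h where "h = (\<lambda>x::sl2. case x of (x1, x2, x3) \<Rightarrow> (a * (x1 div b), a * (x2 div b), a * (x3 div b)))"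
  define hh where "hh = Iq (q0 * b)"
  have dv: "(q0 * b * t) div b = q0 * t" for t
  proof -
    have "q0 * b * t = b * (q0 * t)" by (simp add: algebra_simps)
    then show ?thesis using r(2) by simp
  qed
  have hpm: "h (pm (q0 * b) y) = pm (a * q0) y" for y
  proof -
    obtain y1 y2 y3 where y: "y = (y1, y2, y3)" by (cases y) auto
    have "h (pm (q0 * b) y) = (a * (q0 * y1), a * (q0 * y2), a * (q0 * y3))"
      unfolding y pm_simp h_def prod.case dv ..
    then show ?thesis unfolding y by (simp add: mult.assoc)
  qed
  have Ls: "Iq (q0 * b) \<subseteq> L" using Iq_mono[of q0 b] q0 by blast
  have mem: "x \<in> hh \<Longrightarrow> \<exists>y. x = pm (q0 * b) y" for x unfolding hh_def Iq_def by blast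
  have adm: "admissible L (h, hh)"
    unfolding admissible_def prod.case
  proof (intro conjI)
    show "lie_subalg hh" unfolding hh_def by (rule Iq_lie)
    show "fin_codim hh L" unfolding hh_def using Iq_codim[OF _ Ls subL] q0 r by simp
    show "\<forall>x\<in>hh. h x \<in> L"
    proof
      fix x assume "x \<in> hh"
      then obtain y where x: "x = pm (q0 * b) y" using mem by blast
      have "h x = pm q0 (pm a y)" unfolding x hpm pm_pm by (simp add: mult.commute)
      moreover have "pm q0 (pm a y) \<in> Iq q0" unfolding Iq_def by (rule rangeI)
      ultimately show "h x \<in> L" using q0 by auto
    qed
    show "\<forall>x\<in>hh. \<forall>y\<in>hh. h (sl2_add x y) = sl2_add (h x) (h y)"
    proof (intro ballI)
      fix x x' assume "x \<in> hh" "x' \<in> hh"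
      then obtain y y' where x: "x = pm (q0 * b) y" "x' = pm (q0 * b) y'" using mem by blast
      show "h (sl2_add x x') = sl2_add (h x) (h x')"
        by (simp add: x sl2_add_fun pm_add[symmetric] hpm)
    qed
    show "\<forall>k. \<forall>x\<in>hh. h (sl2_scale k x) = sl2_scale k (h x)"
    proof (intro allI ballI)
      fix k x assume "x \<in> hh"
      then obtain y where x: "x = pm (q0 * b) y" using mem by blast
      show "h (sl2_scale k x) = sl2_scale k (h x)"
        by (simp add: x pm_scale[symmetric] hpm)
    qed
    show "\<forall>p1\<in>hh. \<forall>p2\<in>hh. h (sl2_bracket p1 p2) = sl2_bracket (h p1) p2 \<and> h (sl2_bracket p1 p2) = sl2_bracket p1 (h p2)"
    proof (intro ballI conjI)
      fix x x' assume "x \<in> hh" "x' \<in> hh"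
      then obtain y y' where x: "x = pm (q0 * b) y" "x' = pm (q0 * b) y'" using mem by blast
      have e: "h (sl2_bracket x x') = pm (a * q0 * (q0 * b)) (sl2_bracket y y')"
      proof -
        have "sl2_bracket x x' = pm (q0 * b) (pm (q0 * b) (sl2_bracket y y'))"
          by (simp add: x pm_br pm_pm)
        then have "h (sl2_bracket x x') = h (pm (q0 * b) (pm (q0 * b) (sl2_bracket y y')))" by simp
        also have "\<dots> = pm (a * q0) (pm (q0 * b) (sl2_bracket y y'))" by (rule hpm)
        also have "\<dots> = pm (a * q0 * (q0 * b)) (sl2_bracket y y')" by (rule pm_pm)
        finally show ?thesis .
      qed
      show "h (sl2_bracket x x') = sl2_bracket (h x) x'"
        unfolding e by (simp add: hpm x pm_br)
      have c: "a * q0 * (q0 * b) = q0 * b * (a * q0)" by (simp add: ac_simps)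
      have "sl2_bracket x (h x') = pm (q0 * b * (a * q0)) (sl2_bracket y y')"
        unfolding x hpm by (rule pm_br)
      then show "h (sl2_bracket x x') = sl2_bracket x (h x')"
        unfolding e c by simp
    qed
  qed
  have "rep L (h, hh) r"
    unfolding rep_def
  proof (intro exI[of _ hh] conjI ballI)
    show "lie_subalg hh" "fin_codim hh L" using adm by (simp_all add: admissible_def)
    show "hh \<subseteq> snd (h, hh)" by simp
    fix x assume "x \<in> hh"
    then obtain y where x: "x = pm (q0 * b) y" using mem by blast
    show "fx r x (fst (h, hh) x)"
      unfolding x fst_conv hpm r(1) using fx_surj[OF r(2)] .
  qed
  then show ?thesis using adm by blast
qed

end



theorem theorem6p9:
  fixes L :: "sl2 set"
  assumes "lie_subalg L" and "fin_codim L UNIV"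
  shows "(\<forall>p q. admissible L p \<longrightarrow> admissible L q \<longrightarrow>
            adm_equiv L (adm_mul p q) (adm_mul q p))
       \<and> (\<exists>\<Phi> :: sl2_pair \<Rightarrow> complex poly fract.
            (\<forall>p q. admissible L p \<longrightarrow> admissible L q \<longrightarrow> (\<Phi> p = \<Phi> q \<longleftrightarrow> adm_equiv L p q))
          \<and> (\<forall>r. \<exists>p. admissible L p \<and> \<Phi> p = r)
          \<and> (\<forall>k p. admissible L p \<longrightarrow> \<Phi> (adm_scale k p) = Fract [:k:] 1 * \<Phi> p)
          \<and> (\<forall>p q. admissible L p \<longrightarrow> admissible L q \<longrightarrow> \<Phi> (adm_add p q) = \<Phi> p + \<Phi> q)
          \<and> (\<forall>p q. admissible L p \<longrightarrow> admissible L q \<longrightarrow> \<Phi> (adm_mul p q) = \<Phi> p * \<Phi> q))"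
proof -
  interpret LL L using assms by unfold_locales
  define \<Phi> where "\<Phi> = (\<lambda>P. SOME f. rep L P f)"
  have rp: "rep L P (\<Phi> P)" if "admissible L P" for P
  proof (cases P)
    case (Pair h hh)
    then show ?thesis using R1[of h hh] that by (simp add: \<Phi>_def)
  qed
  have ev: "\<Phi> P = f" if "rep L P f" for P f
    unfolding \<Phi>_def using Phi_eq[OF that] .
  have part1: "\<forall>p q. admissible L p \<longrightarrow> admissible L q \<longrightarrow> adm_equiv L (adm_mul p q) (adm_mul q p)"
  proof (intro allI impI)
    fix p q assume "admissible L p" "admissible L q"
    then have "rep L (adm_mul p q) (\<Phi> p * \<Phi> q)" "rep L (adm_mul q p) (\<Phi> q * \<Phi> p)"
      using R_mul[OF rp rp] by blast+
    then have "rep L (adm_mul p q) (\<Phi> p * \<Phi> q)" "rep L (adm_mul q p) (\<Phi> p * \<Phi> q)"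
      by (simp_all add: mult.commute)
    then show "adm_equiv L (adm_mul p q) (adm_mul q p)" by (rule R3)
  qed
  have p1: "\<forall>p q. admissible L p \<longrightarrow> admissible L q \<longrightarrow> (\<Phi> p = \<Phi> q \<longleftrightarrow> adm_equiv L p q)"
  proof (intro allI impI iffI)
    fix p q assume a: "admissible L p" "admissible L q"
    {
      assume "\<Phi> p = \<Phi> q"
      then show "adm_equiv L p q" using R3[OF rp[OF a(1)]] rp[OF a(2)] by simp
    }
    {
      assume "adm_equiv L p q"
      then have "rep L q (\<Phi> p)" using R4 rp[OF a(1)] by blast
      then show "\<Phi> p = \<Phi> q" using ev by metis
    }
  qed
  have p2: "\<forall>r. \<exists>p. admissible L p \<and> \<Phi> p = r"
  proof
    fix r
    obtain P where "admissible L P" "rep L P r" using R_surj by blast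
    then show "\<exists>p. admissible L p \<and> \<Phi> p = r" using ev by blast
  qed
  have p3: "\<forall>k p. admissible L p \<longrightarrow> \<Phi> (adm_scale k p) = Fract [:k:] 1 * \<Phi> p"
    using R_scale rp ev by blast
  have p4: "\<forall>p q. admissible L p \<longrightarrow> admissible L q \<longrightarrow> \<Phi> (adm_add p q) = \<Phi> p + \<Phi> q"
    using R_add rp ev by blast
  have p5: "\<forall>p q. admissible L p \<longrightarrow> admissible L q \<longrightarrow> \<Phi> (adm_mul p q) = \<Phi> p * \<Phi> q"
    using R_mul rp ev by blast
  show ?thesis using part1 p1 p2 p3 p4 p5 by blast
qed


end
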